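(* Let $N\ge 1$ and let $w=(w_1,\dots,w_{2N})$ be an original sequence with $N$ crossings, and let $\mathcal{C}\subset\mathbb{R}^N$ be its set of charge vectors (see context). Suppose there exist pairwise distinct indices $I_1,\dots,I_M\in\{1,\dots,N\}$, $M\ge 1$, forming a cyclic sequence of adjacent pairs: for every $k=1,\dots,M$ (with $I_{M+1}:=I_1$), the entry $(+,I_k)$ and the entry $(-,I_{k+1})$ occupy two consecutive positions of $w$, in either order. Let $\xi=\sum_{I=1}^N c_I e_I$ with all $c_I>0$. Then $\xi$ does not lie in the cone (set of all nonnegative linear combinations) generated by $\mathcal{C}\setminus\{e_{I_1},\dots,e_{I_M}\}$. Equivalently, every subset $S\subseteq\mathcal{C}$ with $\xi\in\mathrm{Cone}(S)$ contains $e_{I_k}$ for at least one $k\in\{1,\dots,M\}$.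
   Context: An original sequence with $N$ crossings is a word $w=(w_1,\dots,w_{2N})$ with $w_p=(s_p,I_p)$, $s_p\in\{+,-\}$, $I_p\in\{1,\dots,N\}$, such that for every $I\in\{1,\dots,N\}$ there is exactly one position $p$ with $w_p=(+,I)$ and exactly one position $p$ with $w_p=(-,I)$. Such a sequence arises from a $(1,1)$-tangle diagram with $N$ crossings by traversing the tangle from its incoming end to its outgoing end and recording, at each crossing $I$ passed, $+$ if the strand passes over and $-$ if it passes under. Let $e_1,\dots,e_N$ be the standard basis of $\mathbb{R}^N$, and set $\epsilon(+)=1$, $\epsilon(-)=-1$. For each position $p$ define $P(p)=-\epsilon(s_p)\sum_{r\ge p}\epsilon(s_r)\,e_{I_r}$ and $\overline{P}(p)=-\epsilon(s_p)\sum_{r\le p}\epsilon(s_r)\,e_{I_r}$. The set of charge vectors is $\mathcal{C}=\{e_1,\dots,e_N\}\cup\{P(p),\overline{P}(p): 1\le p\le 2N\}$. For a finite set $S\subset\mathbb{R}^N$, $\mathrm{Cone}(S)$ denotes the set of nonnegative linear combinations of elements of $S$. *)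

theory Defs
  imports Complex_Main
begin

text \<open>Vectors of R^N are represented as functions nat => real; the standard basis
  vector e_I is the indicator of I.  Only coordinates 1..N are ever nonzero.
  A sign is a bool: True = +, False = -.  Words are lists of length 2N,
  positions are 0-based (position p of the paper is list index p-1).\<close>

type_synonym letter = "bool \<times> nat"

definition ebasis :: "nat \<Rightarrow> nat \<Rightarrow> real" where
  "ebasis I = (\<lambda>j. if j = I then 1 else 0)"

definition eps :: "bool \<Rightarrow> real" where
  "eps s = (if s then 1 else -1)"

definition original_sequence :: "nat \<Rightarrow> letter list \<Rightarrow> bool" where
  "original_sequence N w \<longleftrightarrow>
     length w = 2 * N \<and>
     (\<forall>p < length w. snd (w ! p) \<in> {1..N}) \<and>
     (\<forall>I \<in> {1..N}. (\<exists>!p. p < length w \<and> w ! p = (True, I)) \<and>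
                   (\<exists>!p. p < length w \<and> w ! p = (False, I)))"

definition Pvec :: "letter list \<Rightarrow> nat \<Rightarrow> nat \<Rightarrow> real" where
  "Pvec w p = (\<lambda>j. - eps (fst (w ! p)) *
      (\<Sum>r\<in>{p..<length w}. eps (fst (w ! r)) * ebasis (snd (w ! r)) j))"

definition Pbarvec :: "letter list \<Rightarrow> nat \<Rightarrow> nat \<Rightarrow> real" where
  "Pbarvec w p = (\<lambda>j. - eps (fst (w ! p)) *
      (\<Sum>r\<in>{0..p}. eps (fst (w ! r)) * ebasis (snd (w ! r)) j))"

definition charges :: "nat \<Rightarrow> letter list \<Rightarrow> (nat \<Rightarrow> real) set" where
  "charges N w = ebasis ` {1..N} \<union> Pvec w ` {..<length w} \<union> Pbarvec w ` {..<length w}"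

definition Cone :: "(nat \<Rightarrow> real) set \<Rightarrow> (nat \<Rightarrow> real) set" where
  "Cone S = {x. \<exists>c. (\<forall>v\<in>S. 0 \<le> c v) \<and> x = (\<lambda>j. \<Sum>v\<in>S. c v * v j)}"

end

theory Submission
  imports Defs
begin

definition pos :: "letter list \<Rightarrow> bool \<Rightarrow> nat \<Rightarrow> nat" where
  "pos w s J = (THE p. p < length w \<and> w ! p = (s, J))"

lemma pos_props:
  assumes "original_sequence N w" "J \<in> {1..N}"
  shows "pos w s J < length w \<and> w ! (pos w s J) = (s, J)"
proof -
  have "\<exists>!p. p < length w \<and> w ! p = (s, J)"
  proof -
    have "(\<exists>!p. p < length w \<and> w ! p = (True, J)) \<and> (\<exists>!p. p < length w \<and> w ! p = (False, J))"
      using assms unfolding original_sequence_def by blast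
    then show ?thesis by (cases s) simp_all
  qed
  then show ?thesis unfolding pos_def by (rule theI')
qed

lemma pos_unique:
  assumes "original_sequence N w" "J \<in> {1..N}" "q < length w" "w ! q = (s, J)"
  shows "q = pos w s J"
proof -
  have "\<exists>!p. p < length w \<and> w ! p = (s, J)"
  proof -
    have "(\<exists>!p. p < length w \<and> w ! p = (True, J)) \<and> (\<exists>!p. p < length w \<and> w ! p = (False, J))"
      using assms unfolding original_sequence_def by blast
    then show ?thesis by (cases s) simp_all
  qed
  then show ?thesis unfolding pos_def using assms(3,4)
    by (metis (mono_tags, lifting) the_equality)
qed

lemma pointwise:
  assumes "original_sequence N w" "J \<in> {1..N}" "r < length w"
  shows "eps (fst (w ! r)) * ebasis (snd (w ! r)) J =
    (if r = pos w True J then 1 else 0) - (if r = pos w False J then 1 else 0)"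
proof -
  obtain s J' where sj: "w ! r = (s, J')" by (cases "w ! r")
  have T: "w ! (pos w True J) = (True, J)" and F: "w ! (pos w False J) = (False, J)"
    using pos_props[OF assms(1,2)] by auto
  show ?thesis
  proof (cases "J' = J")
    case True
    then show ?thesis
    proof (cases s)
      case True
      then have "r = pos w True J" using pos_unique[OF assms] sj \<open>J' = J\<close> by auto
      then show ?thesis using sj True \<open>J' = J\<close> F by (auto simp: eps_def ebasis_def)
    next
      case False
      then have "r = pos w False J" using pos_unique[OF assms] sj \<open>J' = J\<close> by auto
      then show ?thesis using sj False \<open>J' = J\<close> T by (auto simp: eps_def ebasis_def)
    qed
  next
    case False
    then show ?thesis using sj T F by (auto simp: eps_def ebasis_def)
  qed
qed

lemma sumR:
  assumes "original_sequence N w" "J \<in> {1..N}" "R \<subseteq> {..<length w}"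
  shows "(\<Sum>r\<in>R. eps (fst (w ! r)) * ebasis (snd (w ! r)) J) =
    (if pos w True J \<in> R then 1 else 0) - (if pos w False J \<in> R then 1 else 0)"
proof -
  have fin: "finite R" using assms(3) finite_subset by blast
  have "(\<Sum>r\<in>R. eps (fst (w ! r)) * ebasis (snd (w ! r)) J) =
     (\<Sum>r\<in>R. (if r = pos w True J then 1 else 0) - (if r = pos w False J then (1::real) else 0))"
  proof (intro sum.cong refl)
    fix r assume "r \<in> R"
    then have "r < length w" using assms(3) by auto
    then show "eps (fst (w ! r)) * ebasis (snd (w ! r)) J =
      (if r = pos w True J then 1 else 0) - (if r = pos w False J then (1::real) else 0)"
      by (rule pointwise[OF assms(1,2)])
  qed
  also have "\<dots> = (\<Sum>r\<in>R. (if r = pos w True J then 1 else 0)) - (\<Sum>r\<in>R. (if r = pos w False J then (1::real) else 0))"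
    by (simp add: sum_subtractf)
  also have "\<dots> = (if pos w True J \<in> R then 1 else 0) - (if pos w False J \<in> R then 1 else 0)"
    using fin by (simp add: sum.delta')
  finally show ?thesis .
qed

lemma adj:
  assumes "(b = a + 1 \<or> a = b + 1)" "w ! a = (True, x)" "w ! b = (False, y)" "a < L" "b < L"
  shows "- eps (fst (w ! p)) * ((if a \<in> {p..<L} then 1 else 0) - (if b \<in> {p..<L} then 1 else 0)) \<le> 0"
    and "- eps (fst (w ! p)) * ((if a \<in> {0..p} then 1 else 0) - (if b \<in> {0..p} then 1 else 0)) \<le> 0"
  using assms by (cases "p = a"; cases "p = b"; auto simp: eps_def)+


lemma bij_shift:
  assumes "M \<ge> (1::nat)"
  shows "bij_betw (\<lambda>k. (k + 1) mod M) {..<M} {..<M}"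
proof -
  have inj: "inj_on (\<lambda>k. (k + 1) mod M) {..<M}"
  proof (rule inj_onI)
    fix x y assume "x \<in> {..<M}" "y \<in> {..<M}" "(x + 1) mod M = (y + 1) mod M"
    then show "x = y"
      by (metis Suc_eq_plus1 Suc_leI lessThan_iff mod_less mod_self
          nat.inject order.not_eq_order_implies_strict le_neq_implies_less zero_neq_one Suc_inject old.nat.distinct(2))
  qed
  have sub: "(\<lambda>k. (k + 1) mod M) ` {..<M} \<subseteq> {..<M}" using assms by auto
  have "(\<lambda>k. (k + 1) mod M) ` {..<M} = {..<M}"
    using endo_inj_surj[OF _ sub inj] by simp
  then show ?thesis using inj unfolding bij_betw_def by simp
qed

theorem proposition3p1:
  fixes N M :: nat and w :: "letter list" and I :: "nat \<Rightarrow> nat" and c :: "nat \<Rightarrow> real"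
  assumes "N \<ge> 1"
    and "original_sequence N w"
    and "M \<ge> 1"
    and "\<forall>k<M. I k \<in> {1..N}"
    and "inj_on I {..<M}"
    and "\<forall>k<M. \<exists>p. p + 1 < length w \<and>
           ((w ! p = (True, I k) \<and> w ! (p + 1) = (False, I ((k + 1) mod M))) \<or>
            (w ! p = (False, I ((k + 1) mod M)) \<and> w ! (p + 1) = (True, I k)))"
    and "\<forall>J\<in>{1..N}. c J > 0"
  shows "(\<lambda>j. \<Sum>J\<in>{1..N}. c J * ebasis J j) \<notin>
           Cone (charges N w - ebasis ` I ` {..<M})"
proof
  define L where "L = length w"
  define S where "S = charges N w - ebasis ` I ` {..<M}"
  define \<phi> where "\<phi> v = (\<Sum>k<M. v (I k))" for v :: "nat \<Rightarrow> real"
  define a where "a k = pos w True (I k)" for k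
  define b where "b k = pos w False (I ((k + 1) mod M))" for k
  have osq: "original_sequence N w" by fact
  have Ik: "I k \<in> {1..N}" if "k < M" for k using assms(4) that by auto
  have Ik1: "I ((k + 1) mod M) \<in> {1..N}" for k
    using assms(3,4) by (meson less_le_trans mod_less_divisor zero_less_one)
  have aprops: "a k < L \<and> w ! a k = (True, I k)" if "k < M" for k
    using pos_props[OF osq Ik[OF that]] unfolding a_def L_def by blast
  have bprops: "b k < L \<and> w ! b k = (False, I ((k + 1) mod M))" for k
    using pos_props[OF osq Ik1] unfolding b_def L_def by blast
  have abadj: "b k = a k + 1 \<or> a k = b k + 1" if kM: "k < M" for k
  proof -
    obtain p where p: "p + 1 < length w"
      "(w ! p = (True, I k) \<and> w ! (p + 1) = (False, I ((k + 1) mod M))) \<or>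
       (w ! p = (False, I ((k + 1) mod M)) \<and> w ! (p + 1) = (True, I k))"
      using assms(6) kM by blast
    show ?thesis using p(2)
    proof
      assume h: "w ! p = (True, I k) \<and> w ! (p + 1) = (False, I ((k + 1) mod M))"
      have "p = a k" unfolding a_def using pos_unique[OF osq Ik[OF kM]] p(1) h by simp
      moreover have "p + 1 = b k" unfolding b_def using pos_unique[OF osq Ik1] p(1) h by simp
      ultimately show ?thesis by simp
    next
      assume h: "w ! p = (False, I ((k + 1) mod M)) \<and> w ! (p + 1) = (True, I k)"
      have "p + 1 = a k" unfolding a_def using pos_unique[OF osq Ik[OF kM]] p(1) h by simp
      moreover have "p = b k" unfolding b_def using pos_unique[OF osq Ik1] p(1) h by simp
      ultimately show ?thesis by simp
    qed
  qed
  have cyc: "(\<Sum>k<M. \<Sum>r\<in>R. eps (fst (w ! r)) * ebasis (snd (w ! r)) (I k)) =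
      (\<Sum>k<M. (if a k \<in> R then 1 else 0) - (if b k \<in> R then 1 else 0))"
    if R: "R \<subseteq> {..<L}" for R
  proof -
    have "(\<Sum>k<M. \<Sum>r\<in>R. eps (fst (w ! r)) * ebasis (snd (w ! r)) (I k)) =
      (\<Sum>k<M. (if a k \<in> R then 1 else 0) - (if pos w False (I k) \<in> R then (1::real) else 0))"
      using sumR[OF osq Ik] R unfolding a_def L_def by (intro sum.cong refl) auto
    also have "\<dots> = (\<Sum>k<M. (if a k \<in> R then 1 else 0)) - (\<Sum>k<M. if pos w False (I k) \<in> R then (1::real) else 0)"
      by (simp add: sum_subtractf)
    also have "(\<Sum>k<M. if pos w False (I k) \<in> R then (1::real) else 0) =
        (\<Sum>k<M. if b k \<in> R then (1::real) else 0)"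
      unfolding b_def
      using sum.reindex_bij_betw[OF bij_shift[OF assms(3)], of "\<lambda>k. if pos w False (I k) \<in> R then (1::real) else 0"]
      by simp
    also have "(\<Sum>k<M. (if a k \<in> R then 1 else 0)) - (\<Sum>k<M. if b k \<in> R then (1::real) else 0) =
       (\<Sum>k<M. (if a k \<in> R then 1 else 0) - (if b k \<in> R then 1 else 0))"
      by (simp add: sum_subtractf)
    finally show ?thesis .
  qed
  have phiS: "\<phi> v \<le> 0" if "v \<in> S" for v
  proof -
    have "v \<in> charges N w" "v \<notin> ebasis ` I ` {..<M}" using that unfolding S_def by auto
    then consider (E) J where "J \<in> {1..N}" "v = ebasis J" "v \<notin> ebasis ` I ` {..<M}"
      | (P) p where "p < L" "v = Pvec w p" | (Q) p where "p < L" "v = Pbarvec w p"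
      unfolding charges_def L_def by blast
    then show ?thesis
    proof cases
      case E
      have "J \<noteq> I k" if "k < M" for k using E(2,3) that by blast
      then have "\<phi> v = 0" unfolding \<phi>_def E(2) ebasis_def by (intro sum.neutral) auto
      then show ?thesis by simp
    next
      case P
      have "\<phi> v = (\<Sum>k<M. - eps (fst (w ! p)) *
            (\<Sum>r\<in>{p..<L}. eps (fst (w ! r)) * ebasis (snd (w ! r)) (I k)))"
        unfolding \<phi>_def P(2) Pvec_def L_def by simp
      also have "\<dots> = - eps (fst (w ! p)) *
         (\<Sum>k<M. \<Sum>r\<in>{p..<L}. eps (fst (w ! r)) * ebasis (snd (w ! r)) (I k))"
        by (simp add: sum_distrib_left)
      also have "\<dots> = - eps (fst (w ! p)) *
         (\<Sum>k<M. (if a k \<in> {p..<L} then 1 else 0) - (if b k \<in> {p..<L} then 1 else 0))"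
        by (subst cyc) auto
      also have "\<dots> = (\<Sum>k<M. - eps (fst (w ! p)) *
         ((if a k \<in> {p..<L} then 1 else 0) - (if b k \<in> {p..<L} then 1 else 0)))"
        by (simp add: sum_distrib_left)
      also have "\<dots> \<le> 0"
      proof (rule sum_nonpos)
        fix k assume "k \<in> {..<M}"
        then have k: "k < M" by simp
        show "- eps (fst (w ! p)) *
         ((if a k \<in> {p..<L} then 1 else 0) - (if b k \<in> {p..<L} then 1 else 0)) \<le> 0"
          using adj(1)[OF abadj[OF k] conjunct2[OF aprops[OF k]] conjunct2[OF bprops]
              conjunct1[OF aprops[OF k]] conjunct1[OF bprops]] .
      qed
      finally show ?thesis .
    next
      case Q
      have "\<phi> v = (\<Sum>k<M. - eps (fst (w ! p)) *
            (\<Sum>r\<in>{0..p}. eps (fst (w ! r)) * ebasis (snd (w ! r)) (I k)))"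
        unfolding \<phi>_def Q(2) Pbarvec_def L_def by simp
      also have "\<dots> = - eps (fst (w ! p)) *
         (\<Sum>k<M. \<Sum>r\<in>{0..p}. eps (fst (w ! r)) * ebasis (snd (w ! r)) (I k))"
        by (simp add: sum_distrib_left)
      also have "\<dots> = - eps (fst (w ! p)) *
         (\<Sum>k<M. (if a k \<in> {0..p} then 1 else 0) - (if b k \<in> {0..p} then 1 else 0))"
        using Q(1) by (subst cyc) auto
      also have "\<dots> = (\<Sum>k<M. - eps (fst (w ! p)) *
         ((if a k \<in> {0..p} then 1 else 0) - (if b k \<in> {0..p} then 1 else 0)))"
        by (simp add: sum_distrib_left)
      also have "\<dots> \<le> 0"
      proof (rule sum_nonpos)
        fix k assume "k \<in> {..<M}"
        then have k: "k < M" by simp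
        show "- eps (fst (w ! p)) *
         ((if a k \<in> {0..p} then 1 else 0) - (if b k \<in> {0..p} then 1 else 0)) \<le> 0"
          using adj(2)[OF abadj[OF k] conjunct2[OF aprops[OF k]] conjunct2[OF bprops]
              conjunct1[OF aprops[OF k]] conjunct1[OF bprops]] .
      qed
      finally show ?thesis .
    qed
  qed
  assume "(\<lambda>j. \<Sum>J\<in>{1..N}. c J * ebasis J j) \<in> Cone (charges N w - ebasis ` I ` {..<M})"
  then obtain cc where cc: "\<forall>v\<in>S. 0 \<le> cc v"
    "(\<lambda>j. \<Sum>J\<in>{1..N}. c J * ebasis J j) = (\<lambda>j. \<Sum>v\<in>S. cc v * v j)"
    unfolding Cone_def S_def by blast
  have "\<phi> (\<lambda>j. \<Sum>v\<in>S. cc v * v j) = (\<Sum>v\<in>S. cc v * \<phi> v)"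
    unfolding \<phi>_def by (simp add: sum_distrib_left sum.swap[of _ "{..<M}"])
  also have "\<dots> \<le> 0"
    using cc(1) phiS by (intro sum_nonpos mult_nonneg_nonpos) auto
  finally have le: "\<phi> (\<lambda>j. \<Sum>J\<in>{1..N}. c J * ebasis J j) \<le> 0" using cc(2) by simp
  have "\<phi> (\<lambda>j. \<Sum>J\<in>{1..N}. c J * ebasis J j) = (\<Sum>k<M. c (I k))"
    unfolding \<phi>_def ebasis_def proof (intro sum.cong refl)
    fix k assume "k \<in> {..<M}"
    then have "I k \<in> {1..N}" using Ik by simp
    then show "(\<Sum>J\<in>{1..N}. c J * (if I k = J then 1 else 0)) = c (I k)"
    proof -
      have "(\<Sum>J\<in>{1..N}. c J * (if I k = J then 1 else 0)) = (\<Sum>J\<in>{1..N}. if I k = J then c J else 0)"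
        by (intro sum.cong) auto
      also have "\<dots> = c (I k)" using \<open>I k \<in> {1..N}\<close> by (simp add: sum.delta')
      finally show ?thesis .
    qed
  qed
  also have "\<dots> > 0"
    using assms(3,7) Ik by (intro sum_pos) (auto simp: lessThan_empty_iff)
  finally show False using le by simp
qed

end
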